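(* Let $p$ be an odd prime and let $\Phi_{p^2-1}(x)\in\mathbb{Z}[x]$ be the $(p^2-1)$-th cyclotomic polynomial. Let $$F(x)=\prod_{1\le s<t\le (p^2-1)/2}(x^{2t}-x^{2s}),\qquad T(x)=(-1)^{\frac{p^2+7}{8}}\left(\frac{p^2-1}{2}\right)^{\frac{p^2-1}{4}}x^{\frac{p^2-1}{4}}.$$ Then $\Phi_{p^2-1}(x)$ divides $F(x)-T(x)$ in $\mathbb{Z}[x]$. *)

theory Defs
  imports Complex_Main "HOL-Computational_Algebra.Polynomial"
begin

definition cyclotomic_poly :: "nat \<Rightarrow> int poly" where
  "cyclotomic_poly n = (THE q. map_poly of_int q =
     (\<Prod>k\<in>{k. 1 \<le> k \<and> k \<le> n \<and> coprime k n}. [:- cis (2 * pi * real k / real n), 1:]))"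

end

theory Submission
  imports Defs "HOL-Computational_Algebra.Fundamental_Theorem_Algebra"
begin

lemma ip_add [simp]: "map_poly (of_int :: int \<Rightarrow> complex) (p + q) = map_poly of_int p + map_poly of_int q"
  by (intro poly_eqI) (simp_all add: coeff_map_poly)
lemma ip_diff [simp]: "map_poly (of_int :: int \<Rightarrow> complex) (p - q) = map_poly of_int p - map_poly of_int q"
  by (intro poly_eqI) (simp_all add: coeff_map_poly)
lemma ip_mult [simp]: "map_poly (of_int :: int \<Rightarrow> complex) (p * q) = map_poly of_int p * map_poly of_int q"
  by (intro poly_eqI) (simp_all add: coeff_map_poly coeff_mult)
lemma ip_eq_iff [simp]: "map_poly (of_int :: int \<Rightarrow> complex) p = map_poly of_int q \<longleftrightarrow> p = q"
  by (auto simp: poly_eq_iff coeff_map_poly)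
lemma ip_eq_0 [simp]: "map_poly (of_int :: int \<Rightarrow> complex) p = 0 \<longleftrightarrow> p = 0"
  using ip_eq_iff[of p 0] by (simp del: ip_eq_iff)
lemma ip_1 [simp]: "map_poly (of_int :: int \<Rightarrow> complex) 1 = 1"
  by simp
lemma ip_0 [simp]: "map_poly (of_int :: int \<Rightarrow> complex) 0 = 0"
  by simp
lemma ip_prod: "map_poly (of_int :: int \<Rightarrow> complex) (prod f A) = (\<Prod>x\<in>A. map_poly of_int (f x))"
  by (induction A rule: infinite_finite_induct) auto
lemma ip_degree [simp]: "degree (map_poly (of_int :: int \<Rightarrow> complex) p) = degree p"
  by (rule degree_map_poly) auto
lemma ip_lead [simp]: "lead_coeff (map_poly (of_int :: int \<Rightarrow> complex) p) = of_int (lead_coeff p)"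
  by (simp add: coeff_map_poly)
lemma ip_monom [simp]: "map_poly (of_int :: int \<Rightarrow> complex) (monom c n) = monom (of_int c) n"
  by (simp add: map_poly_monom)
lemma ip_smult [simp]: "map_poly (of_int :: int \<Rightarrow> complex) (smult c p) = smult (of_int c) (map_poly of_int p)"
  by (intro poly_eqI) (simp_all add: coeff_map_poly)

lemma monic_div:
  fixes f g :: "int poly"
  assumes g: "lead_coeff g = 1"
  obtains q r where "f = g * q + r" "r = 0 \<or> degree r < degree g"
proof -
  have g0: "g \<noteq> 0" using g by auto
  obtain q r where qr: "pseudo_divmod f g = (q, r)" by (cases "pseudo_divmod f g") auto
  from pseudo_divmod[OF g0 qr] g show ?thesis using that by auto
qed

lemma monic_quot:
  fixes f g :: "int poly" and P :: "complex poly"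
  assumes g: "lead_coeff g = 1" and eq: "map_poly of_int f = P * map_poly of_int g"
  shows "\<exists>h. P = map_poly of_int h"
proof -
  obtain q r where qr: "f = g * q + r" "r = 0 \<or> degree r < degree g"
    using monic_div[OF g] by blast
  define G where "G = (map_poly of_int g :: complex poly)"
  define Q where "Q = (map_poly of_int q :: complex poly)"
  define R where "R = (map_poly of_int r :: complex poly)"
  have G0: "G \<noteq> 0" using g by (auto simp: G_def)
  have "P * G = G * Q + R" using eq qr(1) by (simp add: G_def Q_def R_def)
  hence R: "R = G * (P - Q)" by (simp add: algebra_simps)
  have "P = Q"
  proof (rule ccontr)
    assume "P \<noteq> Q"
    hence "degree R = degree G + degree (P - Q)" using R G0 by (simp add: degree_mult_eq)
    moreover have "R \<noteq> 0" using R G0 \<open>P \<noteq> Q\<close> by simp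
    ultimately show False using qr(2) by (auto simp: R_def G_def)
  qed
  thus ?thesis unfolding Q_def by blast
qed


lemma cis_eq_1_int: "cis x = 1 \<Longrightarrow> \<exists>N::int. x = 2*pi*of_int N"
proof -
  assume "cis x = 1"
  hence "cos x = 1" by (simp add: complex_eq_iff)
  then obtain N :: int where "x = of_int N * 2 * pi" by (auto simp: cos_one_2pi_int)
  thus ?thesis by (intro exI[of _ N]) simp
qed

lemma cis_root_pow_eq_1:
  assumes d: "d > 0"
  shows "cis (2*pi*real k/real d) ^ j = 1 \<longleftrightarrow> d dvd k*j"
proof
  assume "d dvd k*j"
  then obtain c where c: "k*j = d*c" by blast
  have "cis (2*pi*real k/real d) ^ j = cis (2*pi*(real (k*j)/real d))"
    by (simp add: DeMoivre mult_ac)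
  also have "real (k*j)/real d = real c" using c d by (simp add: field_simps)
  finally show "cis (2*pi*real k/real d) ^ j = 1" by simp
next
  assume "cis (2*pi*real k/real d) ^ j = 1"
  hence "cis (2*pi*(real (k*j)/real d)) = 1" by (simp add: DeMoivre mult_ac)
  then obtain N :: int where "2*pi*(real (k*j)/real d) = 2*pi*of_int N"
    using cis_eq_1_int by blast
  hence "real (k*j)/real d = of_int N"
    using mult_left_cancel[of "2*pi" "real (k*j)/real d" "of_int N"] by simp
  hence "real (k*j) = of_int N * real d" using d by (simp add: field_simps)
  hence "int (k*j) = N * int d" by (metis of_int_eq_iff of_int_mult of_int_of_nat_eq)
  hence "int d dvd int (k*j)" by simp
  thus "d dvd k*j" by (simp only: of_nat_dvd_iff)
qed

definition Prim :: "nat \<Rightarrow> complex set" where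
  "Prim d = {z. z^d = 1 \<and> (\<forall>j. 0<j \<and> j<d \<longrightarrow> z^j \<noteq> 1)}"

definition Kset :: "nat \<Rightarrow> nat set" where
  "Kset d = {k. 1 \<le> k \<and> k \<le> d \<and> coprime k d}"

lemma cis_root_inj:
  assumes d: "d > 0"
  shows "inj_on (\<lambda>k. cis (2*pi*real k/real d)) {1..d}"
proof (rule inj_onI)
  have main: "k = k'" if "k \<le> k'" "k \<in> {1..d}" "k' \<in> {1..d}"
       "cis (2*pi*real k/real d) = cis (2*pi*real k'/real d)" for k k'
  proof (rule ccontr)
    assume "k \<noteq> k'"
    have "cis (2*pi*real k'/real d) / cis (2*pi*real k/real d) = 1"
      using that(4) by simp
    hence "cis (2*pi*real (k'-k)/real d) ^ 1 = 1" using that(1)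
      by (simp add: cis_divide of_nat_diff diff_divide_distrib right_diff_distrib)
    hence "d dvd (k'-k)*1" using cis_root_pow_eq_1[OF d] by blast
    hence "d dvd (k'-k)" by simp
    moreover have "0 < k'-k" "k'-k < d" using that \<open>k\<noteq>k'\<close> by auto
    ultimately show False by (meson nat_dvd_not_less)
  qed
  fix k k' assume "k \<in> {1..d}" "k' \<in> {1..d}" "cis (2*pi*real k/real d) = cis (2*pi*real k'/real d)"
  thus "k = k'" using main[of k k'] main[of k' k] by (cases "k \<le> k'") auto
qed

lemma Prim_image:
  assumes d: "d > 0"
  shows "Prim d = (\<lambda>k. cis (2*pi*real k/real d)) ` Kset d"
proof
  show "(\<lambda>k. cis (2*pi*real k/real d)) ` Kset d \<subseteq> Prim d"
  proof safe
    fix k assume k: "k \<in> Kset d"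
    show "cis (2*pi*real k/real d) \<in> Prim d"
      unfolding Prim_def
    proof (safe)
      show "cis (2*pi*real k/real d) ^ d = 1" using cis_root_pow_eq_1[OF d] by simp
    next
      fix j assume j: "0 < j" "j < d" "cis (2*pi*real k/real d) ^ j = 1"
      hence "d dvd k*j" using cis_root_pow_eq_1[OF d] by simp
      moreover have "coprime d k" using k by (simp add: Kset_def coprime_commute)
      ultimately have "d dvd j" using coprime_dvd_mult_right_iff by blast
      thus False using j by (meson nat_dvd_not_less)
    qed
  qed
next
  show "Prim d \<subseteq> (\<lambda>k. cis (2*pi*real k/real d)) ` Kset d"
  proof
    fix z assume z: "z \<in> Prim d"
    hence "z ^ d = 1" by (simp add: Prim_def)
    then obtain j where j: "j < d" "z = cis (2*pi*real j/real d)"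
      using bij_betw_roots_unity[OF d] unfolding bij_betw_def by auto
    show "z \<in> (\<lambda>k. cis (2*pi*real k/real d)) ` Kset d"
    proof (cases "j = 0")
      case True
      hence "z = 1" using j by simp
      have "d = 1"
      proof (rule ccontr)
        assume "d \<noteq> 1"
        hence "0 < (1::nat) \<and> 1 < d" using d by linarith
        hence "z ^ 1 \<noteq> 1" using z unfolding Prim_def by blast
        thus False using \<open>z = 1\<close> by simp
      qed
      thus ?thesis using \<open>z = 1\<close> by (auto simp: Kset_def image_iff intro!: bexI[of _ 1])
    next
      case False
      have "coprime j d"
      proof (rule ccontr)
        assume nc: "\<not> coprime j d"
        define g where "g = gcd j d"
        have "g \<noteq> 1" using nc unfolding g_def by (simp add: coprime_iff_gcd_eq_1)
        moreover have "g > 0" using d unfolding g_def by simp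
        ultimately have g1: "g > 1" by linarith
        define e where "e = d div g"
        have gd: "g dvd d" "g dvd j" by (simp_all add: g_def)
        have e0: "0 < e" using gd d g1 unfolding e_def by (metis dvd_div_eq_0_iff gr0I less_nat_zero_code)
        have ed: "e < d" using g1 d by (simp add: e_def)
        have "d dvd j*e"
        proof -
          obtain a where a: "j = g*a" using gd by blast
          obtain b where b: "d = g*b" using gd by blast
          have "e = b" using b g1 by (simp add: e_def)
          thus ?thesis using a b by simp
        qed
        hence "z ^ e = 1" using j cis_root_pow_eq_1[OF d] by simp
        thus False using z e0 ed by (simp add: Prim_def)
      qed
      hence "j \<in> Kset d" using False j by (simp add: Kset_def)
      thus ?thesis using j by blast
    qed
  qed
qed

lemma Prim_finite: "d > 0 \<Longrightarrow> finite (Prim d)"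
  by (rule finite_subset[of _ "{z. z^d = 1}"]) (auto simp: Prim_def finite_roots_unity)

lemma Prim_disjoint: "d \<noteq> d' \<Longrightarrow> d > 0 \<Longrightarrow> d' > 0 \<Longrightarrow> Prim d \<inter> Prim d' = {}"
proof -
  assume a: "d \<noteq> d'" "d > 0" "d' > 0"
  have *: "False" if "z \<in> Prim a" "z \<in> Prim b" "a < b" "0 < a" for z a b
    using that unfolding Prim_def by blast
  show ?thesis
  proof (rule ccontr)
    assume "Prim d \<inter> Prim d' \<noteq> {}"
    then obtain z where "z \<in> Prim d" "z \<in> Prim d'" by blast
    thus False using *[of z d d'] *[of z d' d] a by (cases "d < d'") auto
  qed
qed

lemma roots_union:
  assumes n: "n > 0"
  shows "{z::complex. z^n = 1} = (\<Union>d\<in>{d. d dvd n}. Prim d)"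
proof
  show "(\<Union>d\<in>{d. d dvd n}. Prim d) \<subseteq> {z. z^n = 1}"
  proof
    fix z assume "z \<in> (\<Union>d\<in>{d. d dvd n}. Prim d)"
    then obtain d where "d dvd n" "z \<in> Prim d" by blast
    then obtain c where "n = d*c" "z^d = 1" by (auto simp: Prim_def)
    thus "z \<in> {z. z^n = 1}" by (simp add: power_mult)
  qed
next
  show "{z::complex. z^n = 1} \<subseteq> (\<Union>d\<in>{d. d dvd n}. Prim d)"
  proof
    fix z :: complex assume z: "z \<in> {z. z^n = 1}"
    define d where "d = (LEAST j. 0 < j \<and> z^j = 1)"
    have ex: "0 < n \<and> z^n = 1" using z n by simp
    have d1: "0 < d \<and> z^d = 1" unfolding d_def by (rule LeastI[of _ n], rule ex)
    have d2: "\<not> (0 < j \<and> z^j = 1)" if "j < d" for j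
      using not_less_Least[of j "\<lambda>j. 0 < j \<and> z^j = 1"] that unfolding d_def by blast
    have "z ^ (n mod d) = 1"
    proof -
      have "z^n = (z^d)^(n div d) * z^(n mod d)"
        by (metis power_add power_mult div_mult_mod_eq mult.commute)
      thus ?thesis using ex d1 by simp
    qed
    moreover have "n mod d < d" using d1 by simp
    ultimately have "n mod d = 0" using d2[of "n mod d"] by auto
    hence "d dvd n" by auto
    moreover have "z \<in> Prim d" using d1 d2 by (auto simp: Prim_def)
    ultimately show "z \<in> (\<Union>d\<in>{d. d dvd n}. Prim d)" by blast
  qed
qed


lemma xn_decomp:
  assumes n: "n > 0"
  shows "(monom 1 n - 1 :: complex poly) = (\<Prod>z\<in>{z. z^n = 1}. [:-z,1:])"
proof -
  define p where "p = (monom 1 n - 1 :: complex poly)"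
  have polyp: "poly p z = z^n - 1" for z by (simp add: p_def poly_monom)
  have dp: "poly (pderiv p) z = of_nat n * z^(n-1)" for z
    by (simp add: p_def pderiv_monom poly_monom pderiv_diff)
  have rs: "rsquarefree p"
    unfolding rsquarefree_roots
  proof (intro allI notI)
    fix a assume "poly p a = 0 \<and> poly (pderiv p) a = 0"
    hence "a^n = 1" "of_nat n * a^(n-1) = 0" using polyp dp by auto
    moreover from this n have "a \<noteq> 0" by (auto simp: power_0_left)
    ultimately show False using n by simp
  qed
  have degp: "degree p = n" using n unfolding p_def
    using degree_add_eq_left[of "-1" "monom (1::complex) n"] by (simp add: degree_monom_eq)
  have "lead_coeff p = 1" using n degp by (simp add: p_def)
  hence "p = (\<Prod>z|poly p z = 0. [:-z, 1:])"
    using complex_poly_decompose_rsquarefree[OF rs] by simp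
  also have "{z. poly p z = 0} = {z. z^n = 1}" using polyp by auto
  finally show ?thesis by (simp add: p_def)
qed

definition CP :: "nat \<Rightarrow> complex poly" where
  "CP d = (\<Prod>z\<in>Prim d. [:-z,1:])"

lemma xn_prod_CP:
  assumes n: "n > 0"
  shows "(monom 1 n - 1 :: complex poly) = (\<Prod>d\<in>{d. d dvd n}. CP d)"
proof -
  have fin: "finite {d. d dvd n}" using n by simp
  have pos: "d > 0" if "d \<in> {d. d dvd n}" for d using that n by (auto intro!: Nat.gr0I)
  have "(monom 1 n - 1 :: complex poly) = (\<Prod>z\<in>(\<Union>d\<in>{d. d dvd n}. Prim d). [:-z,1:])"
    using xn_decomp[OF n] roots_union[OF n] by simp
  also have "\<dots> = (\<Prod>d\<in>{d. d dvd n}. CP d)"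
    unfolding CP_def
    by (rule prod.UNION_disjoint[OF fin]) (auto intro: Prim_finite pos dest: Prim_disjoint[OF _ pos pos])
  finally show ?thesis .
qed

lemma lead_CP: "lead_coeff (CP d) = 1"
  unfolding CP_def by (simp add: lead_coeff_prod)

lemma CP_int:
  assumes "n > 0"
  shows "\<exists>q. map_poly of_int q = CP n"
  using assms
proof (induction n rule: less_induct)
  case (less n)
  define D where "D = {d. d dvd n} - {n}"
  have Dprop: "0 < d \<and> d < n" if "d \<in> D" for d
    using that less.prems unfolding D_def
    by (auto intro!: Nat.gr0I dest: dvd_imp_le)
  have "\<forall>d\<in>D. \<exists>q. map_poly of_int q = CP d" using less.IH Dprop by blast
  then obtain Q where Q: "\<And>d. d \<in> D \<Longrightarrow> map_poly of_int (Q d) = CP d" by metis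
  have fin: "finite {d. d dvd n}" using less.prems by simp
  have "(monom 1 n - 1 :: complex poly) = CP n * (\<Prod>d\<in>D. CP d)"
    unfolding xn_prod_CP[OF less.prems] D_def
    by (subst prod.remove[OF fin, of n]) auto
  also have "(\<Prod>d\<in>D. CP d) = map_poly of_int (\<Prod>d\<in>D. Q d)"
    by (simp add: ip_prod Q)
  finally have eq: "map_poly of_int (monom 1 n - 1) = CP n * map_poly of_int (\<Prod>d\<in>D. Q d)"
    by simp
  have "of_int (lead_coeff (\<Prod>d\<in>D. Q d)) = (lead_coeff (map_poly of_int (\<Prod>d\<in>D. Q d)) :: complex)"
    by (simp add: coeff_map_poly)
  also have "\<dots> = 1" by (simp add: ip_prod Q lead_coeff_prod lead_CP)
  finally have "lead_coeff (\<Prod>d\<in>D. Q d) = 1" by (simp del: ip_lead)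
  from monic_quot[OF this eq] show ?case by metis
qed

lemma CPK_eq: "d > 0 \<Longrightarrow> (\<Prod>k\<in>{k. 1 \<le> k \<and> k \<le> d \<and> coprime k d}. [:- cis (2 * pi * real k / real d), 1:]) = CP d"
proof -
  assume d: "d > 0"
  have inj: "inj_on (\<lambda>k. cis (2*pi*real k/real d)) (Kset d)"
    by (rule inj_on_subset[OF cis_root_inj[OF d]]) (auto simp: Kset_def)
  show ?thesis
    unfolding CP_def Prim_image[OF d] prod.reindex[OF inj]
    by (simp add: Kset_def)
qed

lemma cyclo_map:
  assumes "n > 0"
  shows "map_poly of_int (cyclotomic_poly n) = CP n"
proof -
  obtain q where q: "map_poly of_int q = CP n" using CP_int[OF assms] by blast
  have "map_poly of_int (cyclotomic_poly n) =
     (\<Prod>k\<in>{k. 1 \<le> k \<and> k \<le> n \<and> coprime k n}. [:- cis (2 * pi * real k / real n), 1:])"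
    unfolding cyclotomic_poly_def
  proof (rule theI[of _ q])
    show "map_poly of_int q = (\<Prod>k\<in>{k. 1 \<le> k \<and> k \<le> n \<and> coprime k n}. [:- cis (2 * pi * real k / real n), 1:])"
      using q CPK_eq[OF assms] by simp
  next
    fix x assume "map_poly of_int x = (\<Prod>k\<in>{k. 1 \<le> k \<and> k \<le> n \<and> coprime k n}. [:- cis (2 * pi * real k / real n), 1:])"
    hence "map_poly of_int x = (map_poly of_int q :: complex poly)" using q CPK_eq[OF assms] by simp
    thus "x = q" by simp
  qed
  thus ?thesis using CPK_eq[OF assms] by simp
qed

lemma degree_CP: "d > 0 \<Longrightarrow> degree (CP d) = card (Prim d)"
  unfolding CP_def by (subst degree_prod_eq_sum_degree) auto


definition Sset :: "nat \<Rightarrow> (nat \<times> nat) set" where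
  "Sset m = {(s, t). 1 \<le> s \<and> s < t \<and> t \<le> m}"

lemma Sset_finite: "finite (Sset m)"
  by (rule finite_subset[of _ "{1..m} \<times> {1..m}"]) (auto simp: Sset_def)

lemma Sset_0: "Sset 0 = {}" by (auto simp: Sset_def)

lemma Sset_Suc: "Sset (Suc m) = Sset m \<union> (\<lambda>s. (s, Suc m)) ` {1..m}"
  by (auto simp: Sset_def)

lemma prod_Sset_Suc:
  fixes g :: "nat \<times> nat \<Rightarrow> 'a::comm_monoid_mult"
  shows "prod g (Sset (Suc m)) = prod g (Sset m) * (\<Prod>s\<in>{1..m}. g (s, Suc m))"
proof -
  have "prod g (Sset (Suc m)) = prod g (Sset m) * prod g ((\<lambda>s. (s, Suc m)) ` {1..m})"
    unfolding Sset_Suc apply (rule prod.union_disjoint) apply (rule Sset_finite) apply simp by (auto simp: Sset_def)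
  also have "prod g ((\<lambda>s. (s, Suc m)) ` {1..m}) = (\<Prod>s\<in>{1..m}. g (s, Suc m))"
    by (subst prod.reindex) (auto simp: inj_on_def)
  finally show ?thesis .
qed

lemma sum_Sset_Suc:
  fixes g :: "nat \<times> nat \<Rightarrow> 'a::comm_monoid_add"
  shows "sum g (Sset (Suc m)) = sum g (Sset m) + (\<Sum>s\<in>{1..m}. g (s, Suc m))"
proof -
  have "sum g (Sset (Suc m)) = sum g (Sset m) + sum g ((\<lambda>s. (s, Suc m)) ` {1..m})"
    unfolding Sset_Suc apply (rule sum.union_disjoint) apply (rule Sset_finite) apply simp by (auto simp: Sset_def)
  also have "sum g ((\<lambda>s. (s, Suc m)) ` {1..m}) = (\<Sum>s\<in>{1..m}. g (s, Suc m))"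
    by (subst sum.reindex) (auto simp: inj_on_def)
  finally show ?thesis .
qed

lemma sum_1_to: "2 * (\<Sum>s\<in>{1..m}. s) = m * (m + 1::nat)"
  by (induction m) auto

lemma card_Sset: "2 * card (Sset m) + m = m^2"
proof (induction m)
  case 0 then show ?case by (simp add: Sset_0)
next
  case (Suc m)
  have "card (Sset (Suc m)) = card (Sset m) + m"
    using sum_Sset_Suc[of "\<lambda>_. (1::nat)" m] by simp
  then show ?case using Suc by (simp add: power2_eq_square algebra_simps)
qed

lemma sum_Sset: "2 * (\<Sum>(s,t)\<in>Sset m. s + t) + m = m^3"
proof (induction m)
  case 0 then show ?case by (simp add: Sset_0)
next
  case (Suc m)
  have "(\<Sum>(s,t)\<in>Sset (Suc m). s + t) = (\<Sum>(s,t)\<in>Sset m. s + t) + (\<Sum>s\<in>{1..m}. s + Suc m)"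
    using sum_Sset_Suc[of "\<lambda>(s,t). s + t" m] by simp
  also have "(\<Sum>s\<in>{1..m}. s + Suc m) = (\<Sum>s\<in>{1..m}. s) + (\<Sum>s\<in>{1..m}. Suc m)"
    by (rule sum.distrib)
  also have "(\<Sum>s\<in>{1..m}. Suc m) = m * Suc m" by simp
  finally have "2 * (\<Sum>(s,t)\<in>Sset (Suc m). s + t) = 2 * (\<Sum>(s,t)\<in>Sset m. s + t) + 2 * (\<Sum>s\<in>{1..m}. s) + 2 * m * Suc m"
    by simp
  then show ?case using Suc sum_1_to[of m] by (simp add: power3_eq_cube algebra_simps)
qed

lemma prod_Sset_diff:
  fixes f :: "nat \<Rightarrow> 'a::comm_monoid_mult"
  shows "(\<Prod>(s,t)\<in>Sset m. f (t - s)) = (\<Prod>d\<in>{1..m}. f d ^ (m - d))"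
proof (induction m)
  case 0 then show ?case by (simp add: Sset_0)
next
  case (Suc m)
  have "(\<Prod>(s,t)\<in>Sset (Suc m). f (t - s)) = (\<Prod>(s,t)\<in>Sset m. f (t - s)) * (\<Prod>s\<in>{1..m}. f (Suc m - s))"
    using prod_Sset_Suc[of "\<lambda>(s,t). f (t - s)" m] by simp
  also have "(\<Prod>s\<in>{1..m}. f (Suc m - s)) = (\<Prod>d\<in>{1..m}. f d)"
  proof (rule prod.reindex_bij_witness[of _ "\<lambda>d. Suc m - d" "\<lambda>s. Suc m - s"]) qed auto
  also have "(\<Prod>(s,t)\<in>Sset m. f (t - s)) = (\<Prod>d\<in>{1..m}. f d ^ (m - d))" by (rule Suc.IH)
  also have "(\<Prod>d\<in>{1..m}. f d ^ (m - d)) * (\<Prod>d\<in>{1..m}. f d) = (\<Prod>d\<in>{1..m}. f d ^ (Suc m - d))"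
    by (subst prod.distrib[symmetric]) (intro prod.cong refl, simp add: Suc_diff_le mult.commute)
  also have "\<dots> = (\<Prod>d\<in>{1..Suc m}. f d ^ (Suc m - d))"
    by (subst prod.nat_ivl_Suc') auto
  finally show ?case .
qed


lemma half_prod_nonneg:
  fixes f :: "nat \<Rightarrow> real"
  assumes h: "even h" and sym: "\<And>d. d \<le> 2*h \<Longrightarrow> f (2*h - d) = f d"
  shows "0 \<le> (\<Prod>d\<in>{1..2*h}. f d ^ (2*h - d))"
proof (cases "h = 0")
  case True then show ?thesis by simp
next
  case False
  have split: "{1..2*h} = {1..<h} \<union> ({h} \<union> {h<..2*h})" using False by auto
  have "(\<Prod>d\<in>{1..2*h}. f d ^ (2*h - d)) =
        (\<Prod>d\<in>{1..<h}. f d ^ (2*h - d)) * (f h ^ h * (\<Prod>d\<in>{h<..2*h}. f d ^ (2*h - d)))"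
  proof -
    have "(\<Prod>d\<in>{1..<h} \<union> ({h} \<union> {h<..2*h}). f d ^ (2*h - d)) =
      (\<Prod>d\<in>{1..<h}. f d ^ (2*h - d)) * (\<Prod>d\<in>{h} \<union> {h<..2*h}. f d ^ (2*h - d))"
      by (rule prod.union_disjoint) auto
    also have "(\<Prod>d\<in>{h} \<union> {h<..2*h}. f d ^ (2*h - d)) = f h ^ h * (\<Prod>d\<in>{h<..2*h}. f d ^ (2*h - d))"
      by (simp add: mult_2)
    finally show ?thesis unfolding split .
  qed
  also have "(\<Prod>d\<in>{h<..2*h}. f d ^ (2*h - d)) = (\<Prod>e\<in>{0..<h}. f e ^ e)"
  proof (rule prod.reindex_bij_witness[of _ "\<lambda>e. 2*h - e" "\<lambda>d. 2*h - d"])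
    fix d assume "d \<in> {h<..2*h}"
    thus "f (2*h - d) ^ (2*h - d) = f d ^ (2*h - d)" using sym[of d] by simp
  qed auto
  also have "(\<Prod>e\<in>{0..<h}. f e ^ e) = (\<Prod>e\<in>{1..<h}. f e ^ e)"
  proof -
    have "{0..<h} = insert 0 {1..<h}" using False by auto
    thus ?thesis by simp
  qed
  finally have eq: "(\<Prod>d\<in>{1..2*h}. f d ^ (2*h - d)) =
      f h ^ h * ((\<Prod>d\<in>{1..<h}. f d ^ (2*h - d)) * (\<Prod>e\<in>{1..<h}. f e ^ e))"
    by (simp add: algebra_simps)
  also have "(\<Prod>d\<in>{1..<h}. f d ^ (2*h - d)) * (\<Prod>e\<in>{1..<h}. f e ^ e) = (\<Prod>d\<in>{1..<h}. (f d ^ 2) ^ h)"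
    by (subst prod.distrib[symmetric]) (intro prod.cong refl, simp add: power_add[symmetric] power_mult[symmetric])
  finally have eq2: "(\<Prod>d\<in>{1..2*h}. f d ^ (2*h - d)) = f h ^ h * (\<Prod>d\<in>{1..<h}. (f d ^ 2) ^ h)" .
  have "0 \<le> f h ^ h" using h by (simp add: zero_le_even_power)
  moreover have "0 \<le> (\<Prod>d\<in>{1..<h}. (f d ^ 2) ^ h)" by (intro prod_nonneg) simp
  ultimately show ?thesis unfolding eq2 by simp
qed


lemma vand_norm:
  fixes \<omega> :: complex
  assumes m: "m > 0" and prim: "\<And>j. \<omega>^j = 1 \<longleftrightarrow> m dvd j" and nw: "norm \<omega> = 1"
  shows "(\<Prod>(s,t)\<in>Sset m. norm (\<omega>^t - \<omega>^s))^2 = real m ^ m"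
proof -
  have w0: "\<omega> \<noteq> 0" using nw by auto
  have inj: "inj_on (\<lambda>s. \<omega>^s) {1..m}"
  proof -
    have main: "s = s'" if "s \<le> s'" "s \<in> {1..m}" "s' \<in> {1..m}" "\<omega>^s = \<omega>^s'" for s s'
    proof (rule ccontr)
      assume "s \<noteq> s'"
      have "\<omega>^s' = \<omega>^s * \<omega>^(s'-s)" using that(1) by (simp add: power_add[symmetric])
      hence "\<omega>^(s'-s) = 1" using that(4) w0 by simp
      hence "m dvd (s'-s)" using prim by simp
      moreover have "0 < s'-s" "s'-s < m" using that \<open>s\<noteq>s'\<close> by auto
      ultimately show False by (meson nat_dvd_not_less)
    qed
    show ?thesis
      by (rule inj_onI) (metis main nat_le_linear)
  qed
  have img: "(\<lambda>s. \<omega>^s) ` {1..m} = {z. z^m = 1}"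
  proof (rule card_subset_eq)
    show "finite {z::complex. z^m = 1}" using m by (simp add: finite_roots_unity)
    show "(\<lambda>s. \<omega>^s) ` {1..m} \<subseteq> {z. z^m = 1}"
      using prim by (auto simp: power_mult[symmetric] mult.commute)
    show "card ((\<lambda>s. \<omega>^s) ` {1..m}) = card {z::complex. z^m = 1}"
      using card_image[OF inj] card_roots_unity_eq[OF m] by simp
  qed
  have XM: "(monom 1 m - 1 :: complex poly) = (\<Prod>s\<in>{1..m}. [:-(\<omega>^s),1:])"
    using xn_decomp[OF m] unfolding img[symmetric] prod.reindex[OF inj] by simp
  have row: "(\<Prod>s\<in>{1..m}-{t}. (\<omega>^t - \<omega>^s)) = of_nat m * (\<omega>^t)^(m-1)" if t: "t \<in> {1..m}" for t
  proof -
    define Q where "Q = (\<Prod>s\<in>{1..m}-{t}. [:-(\<omega>^s),1:])"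
    have eqQ: "(monom 1 m - 1 :: complex poly) = [:-(\<omega>^t),1:] * Q"
      unfolding XM Q_def using t by (subst prod.remove[of _ t]) auto
    have "pderiv (monom 1 m - 1 :: complex poly) = [:-(\<omega>^t),1:] * pderiv Q + Q * pderiv [:-(\<omega>^t),1:]"
      unfolding eqQ by (rule pderiv_mult)
    hence "poly (pderiv (monom 1 m - 1 :: complex poly)) (\<omega>^t) = poly Q (\<omega>^t)"
      by (simp add: pderiv_pCons)
    moreover have "poly (pderiv (monom 1 m - 1 :: complex poly)) x = of_nat m * x^(m-1)" for x
      by (simp add: pderiv_monom poly_monom pderiv_diff)
    moreover have "poly Q (\<omega>^t) = (\<Prod>s\<in>{1..m}-{t}. (\<omega>^t - \<omega>^s))"
      unfolding Q_def poly_prod by simp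
    ultimately show ?thesis by simp
  qed
  define H where "H = (\<lambda>x y. norm (\<omega>^x - \<omega>^y))"
  have Hsym: "H x y = H y x" for x y unfolding H_def by (simp add: norm_minus_commute)
  have "(\<Prod>t\<in>{1..m}. \<Prod>s\<in>{1..m}-{t}. H t s) = (\<Prod>t\<in>{1..m}. real m)"
  proof (rule prod.cong[OF refl])
    fix t assume t: "t \<in> {1..m}"
    have "(\<Prod>s\<in>{1..m}-{t}. H t s) = norm (\<Prod>s\<in>{1..m}-{t}. (\<omega>^t - \<omega>^s))"
      unfolding H_def by (simp add: prod_norm)
    also have "\<dots> = real m" using row[OF t] nw by (simp add: norm_mult norm_power)
    finally show "(\<Prod>s\<in>{1..m}-{t}. H t s) = real m" .
  qed
  hence all: "(\<Prod>t\<in>{1..m}. \<Prod>s\<in>{1..m}-{t}. H t s) = real m ^ m" by simp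
  have sig: "Sigma {1..m} (\<lambda>t. {1..m}-{t}) = Sset m \<union> prod.swap ` Sset m"
    by (auto simp: Sset_def image_iff)
  have "(\<Prod>t\<in>{1..m}. \<Prod>s\<in>{1..m}-{t}. H t s) = (\<Prod>x\<in>Sigma {1..m} (\<lambda>t. {1..m}-{t}). H (fst x) (snd x))"
    by (subst prod.Sigma) (auto simp: split_def)
  also have "\<dots> = (\<Prod>x\<in>Sset m. H (fst x) (snd x)) * (\<Prod>x\<in>prod.swap ` Sset m. H (fst x) (snd x))"
    unfolding sig apply (rule prod.union_disjoint) apply (rule Sset_finite) apply (simp add: Sset_finite) by (auto simp: Sset_def)
  also have "(\<Prod>x\<in>prod.swap ` Sset m. H (fst x) (snd x)) = (\<Prod>x\<in>Sset m. H (fst x) (snd x))"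
    by (subst prod.reindex) (auto simp: Hsym)
  finally have "(\<Prod>x\<in>Sset m. H (fst x) (snd x))^2 = real m ^ m"
    using all by (simp add: power2_eq_square)
  moreover have "(\<Prod>(s,t)\<in>Sset m. norm (\<omega>^t - \<omega>^s)) = (\<Prod>x\<in>Sset m. H (fst x) (snd x))"
    unfolding H_def by (intro prod.cong refl) (auto simp: norm_minus_commute)
  ultimately show ?thesis by simp
qed


lemma sin_sym_odd:
  assumes "odd k"
  shows "sin (real k * pi - x) = sin x"
  using assms by (simp add: sin_diff)

lemma two_i_sin: "cis b - cis (-b) = 2 * \<i> * complex_of_real (sin b)"
  by (simp add: complex_eq_iff)

lemma factor_id:
  assumes "s \<le> t"
  shows "cis \<theta> ^ (2*t) - cis \<theta> ^ (2*s) = cis \<theta> ^ (s+t) * (2 * \<i> * complex_of_real (sin (\<theta> * real (t - s))))"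
proof -
  have "cis \<theta> ^ (s+t) * (2 * \<i> * complex_of_real (sin (\<theta> * real (t - s))))
      = cis (real (s+t) * \<theta>) * (cis (\<theta> * real (t - s)) - cis (-(\<theta> * real (t - s))))"
    by (simp add: two_i_sin DeMoivre)
  also have "\<dots> = cis (real (s+t) * \<theta> + \<theta> * real (t - s)) - cis (real (s+t) * \<theta> - \<theta> * real (t - s))"
    by (simp add: right_diff_distrib cis_mult)
  also have "real (s+t) * \<theta> + \<theta> * real (t - s) = real (2*t) * \<theta>"
    using assms by (simp add: of_nat_diff algebra_simps)
  also have "real (s+t) * \<theta> - \<theta> * real (t - s) = real (2*s) * \<theta>"
    using assms by (simp add: of_nat_diff algebra_simps)
  finally show ?thesis by (simp add: DeMoivre)
qed


lemma keyB:
  assumes a: "a > 0" and mdef: "m = 4*a" and cop: "coprime k m" and oddk: "odd k"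
  defines "\<zeta> \<equiv> cis (pi * real k / real m)"
  shows "(\<Prod>(s,t)\<in>Sset m. \<zeta>^(2*t) - \<zeta>^(2*s)) = (-1)^(a+1) * of_nat m^(2*a) * \<zeta>^(2*a)"
proof -
  define \<theta> where "\<theta> = pi * real k / real m"
  have m: "m > 0" using a mdef by simp
  have z: "\<zeta> = cis \<theta>" by (simp add: \<zeta>_def \<theta>_def)
  define \<omega> where "\<omega> = \<zeta>^2"
  have w: "\<omega> = cis (2*pi*real k/real m)" unfolding \<omega>_def z \<theta>_def by (simp add: DeMoivre mult.assoc)
  have prim: "\<omega>^j = 1 \<longleftrightarrow> m dvd j" for j
  proof -
    have "\<omega>^j = 1 \<longleftrightarrow> m dvd k*j" unfolding w by (rule cis_root_pow_eq_1[OF m])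
    also have "\<dots> \<longleftrightarrow> m dvd j" using cop by (simp add: coprime_commute coprime_dvd_mult_right_iff)
    finally show ?thesis .
  qed
  have nw: "norm \<omega> = 1" unfolding w by simp
  define c where "c = card (Sset m)"
  define Sg where "Sg = (\<Sum>(s,t)\<in>Sset m. s + t)"
  have c_eq: "c + 2*a = 8*a^2"
  proof -
    have "2*c + m = m^2" unfolding c_def by (rule card_Sset)
    thus ?thesis unfolding mdef by (simp add: power2_eq_square)
  qed
  have S_eq: "Sg + 2*a = 32*a^3"
  proof -
    have "2*Sg + m = m^3" unfolding Sg_def by (rule sum_Sset)
    thus ?thesis unfolding mdef by (simp add: power3_eq_cube)
  qed
  define R where "R = (\<Prod>(s,t)\<in>Sset m. sin (\<theta> * real (t - s)))"
  have R_nonneg: "0 \<le> R"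
  proof -
    have "R = (\<Prod>d\<in>{1..m}. sin (\<theta> * real d) ^ (m - d))"
      unfolding R_def by (rule prod_Sset_diff[of "\<lambda>d. sin (\<theta> * real d)"])
    also have "\<dots> = (\<Prod>d\<in>{1..2*(2*a)}. sin (\<theta> * real d) ^ (2*(2*a) - d))"
      using mdef by simp
    also have "0 \<le> \<dots>"
    proof (rule half_prod_nonneg)
      show "even (2*a)" by simp
      fix d assume d: "d \<le> 2*(2*a)"
      have "\<theta> * real (2*(2*a) - d) = real k * pi - \<theta> * real d"
        using d m mdef by (simp add: \<theta>_def of_nat_diff field_simps)
      thus "sin (\<theta> * real (2*(2*a) - d)) = sin (\<theta> * real d)"
        using sin_sym_odd[OF oddk] by simp
    qed
    finally show ?thesis .
  qed
  have V: "(\<Prod>(s,t)\<in>Sset m. \<zeta>^(2*t) - \<zeta>^(2*s)) = \<zeta>^Sg * (2*\<i>)^c * complex_of_real R"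
  proof -
    have "(\<Prod>(s,t)\<in>Sset m. \<zeta>^(2*t) - \<zeta>^(2*s)) =
          (\<Prod>(s,t)\<in>Sset m. \<zeta>^(s+t) * ((2*\<i>) * complex_of_real (sin (\<theta> * real (t - s)))))"
      unfolding z by (intro prod.cong refl) (auto simp: Sset_def factor_id)
    also have "\<dots> = (\<Prod>(s,t)\<in>Sset m. \<zeta>^(s+t)) * (\<Prod>(s,t)\<in>Sset m. (2*\<i>)) *
                     (\<Prod>(s,t)\<in>Sset m. complex_of_real (sin (\<theta> * real (t - s))))"
      by (simp add: prod.distrib split_def mult.assoc)
    also have "(\<Prod>(s,t)\<in>Sset m. \<zeta>^(s+t)) = \<zeta>^Sg"
      unfolding Sg_def by (simp add: power_sum split_def)
    also have "(\<Prod>(s,t)\<in>Sset m. (2*\<i>)) = (2*\<i>)^c"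
      unfolding c_def by (simp add: split_def)
    also have "(\<Prod>(s,t)\<in>Sset m. complex_of_real (sin (\<theta> * real (t - s)))) = complex_of_real R"
      unfolding R_def by (simp add: split_def)
    finally show ?thesis .
  qed
  have z8: "\<zeta>^(8*a) = 1"
  proof -
    have "\<zeta>^(8*a) = cis (2 * pi * real k)" unfolding z \<theta>_def DeMoivre using mdef a
      by (simp add: field_simps)
    thus ?thesis by simp
  qed
  have z4: "\<zeta>^(4*a) = -1"
  proof -
    have "\<zeta>^(4*a) = cis (real k * pi)" unfolding z \<theta>_def DeMoivre using mdef a
      by (simp add: field_simps)
    thus ?thesis using oddk by (simp add: complex_eq_iff)
  qed
  have zS: "\<zeta> ^ Sg = -(\<zeta> ^ (2*a))"
  proof -
    have "\<zeta>^Sg * \<zeta>^(2*a) = 1"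
    proof -
      have "\<zeta>^Sg * \<zeta>^(2*a) = \<zeta>^(32*a^3)" using S_eq by (simp add: power_add[symmetric])
      also have "32*a^3 = (8*a)*(4*a^2)" by (simp add: power2_eq_square power3_eq_cube)
      also have "\<zeta>^((8*a)*(4*a^2)) = 1" by (subst power_mult) (simp only: z8 power_one)
      finally show ?thesis .
    qed
    moreover have "\<zeta>^(2*a) * \<zeta>^(2*a) = -1" using z4 by (simp add: power_add[symmetric])
    ultimately have "\<zeta>^Sg * (\<zeta>^(2*a) * \<zeta>^(2*a)) = \<zeta>^(2*a)"
    proof -
      assume A: "\<zeta>^Sg * \<zeta>^(2*a) = 1"
      have "\<zeta>^Sg * (\<zeta>^(2*a) * \<zeta>^(2*a)) = (\<zeta>^Sg * \<zeta>^(2*a)) * \<zeta>^(2*a)"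
        by (simp only: mult.assoc)
      also have "\<dots> = \<zeta>^(2*a)" by (simp only: A mult_1)
      finally show ?thesis .
    qed
    hence "- (\<zeta> ^ Sg) = \<zeta> ^ (2 * a)" using \<open>\<zeta>^(2*a) * \<zeta>^(2*a) = -1\<close> by simp
    thus ?thesis by (metis minus_minus)
  qed
  have ic: "\<i>^c = (-1)^a"
  proof -
    have "\<i>^c * \<i>^(2*a) = 1"
    proof -
      have "\<i>^c * \<i>^(2*a) = \<i>^(c + 2*a)" by (simp only: power_add)
      also have "c + 2*a = 4*(2*a^2)" using c_eq by simp
      also have "\<i>^(4*(2*a^2)) = 1" by (subst power_mult) simp
      finally show ?thesis .
    qed
    moreover have "\<i>^(2*a) = (-1::complex)^a" by (simp add: power_mult)
    ultimately have "\<i>^c * (-1)^a = 1" by simp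
    hence "\<i>^c * (-1)^a * (-1)^a = (-1)^a" by simp
    thus ?thesis by (simp add: mult.assoc power_add[symmetric] flip: power_mult_distrib)
  qed
  have V2: "(\<Prod>(s,t)\<in>Sset m. \<zeta>^(2*t) - \<zeta>^(2*s)) = (-1)^(a+1) * \<zeta>^(2*a) * complex_of_real (2^c * R)"
    unfolding V zS power_mult_distrib ic by simp
  have nz: "norm \<zeta> = 1" unfolding z by simp
  have "norm (\<Prod>(s,t)\<in>Sset m. \<zeta>^(2*t) - \<zeta>^(2*s)) = 2^c * R"
    unfolding V2 using R_nonneg by (simp add: norm_mult norm_power nz)
  moreover have "norm (\<Prod>(s,t)\<in>Sset m. \<zeta>^(2*t) - \<zeta>^(2*s)) = real m ^ (2*a)"
  proof -
    have "norm (\<Prod>(s,t)\<in>Sset m. \<zeta>^(2*t) - \<zeta>^(2*s)) = (\<Prod>(s,t)\<in>Sset m. norm (\<omega>^t - \<omega>^s))"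
      unfolding prod_norm[symmetric] \<omega>_def by (simp add: split_def power_mult)
    also have "\<dots> = real m ^ (2*a)"
    proof (rule power2_eq_imp_eq)
      have "(\<Prod>(s,t)\<in>Sset m. norm (\<omega>^t - \<omega>^s))^2 = real m ^ m"
        by (rule vand_norm[OF m prim nw])
      also have "real m ^ m = (real m ^ (2*a))^2" unfolding power_mult[symmetric] by (rule arg_cong[where f="\<lambda>e. real m ^ e"]) (simp add: mdef)
      finally show "(\<Prod>(s,t)\<in>Sset m. norm (\<omega>^t - \<omega>^s))^2 = (real m ^ (2*a))^2" .
      show "0 \<le> (\<Prod>(s,t)\<in>Sset m. norm (\<omega>^t - \<omega>^s))" by (simp add: prod_nonneg split_def)
      show "0 \<le> real m ^ (2*a)" by simp
    qed
    finally show ?thesis .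
  qed
  ultimately have "2^c * R = real m ^ (2*a)" by simp
  thus ?thesis unfolding V2 by simp
qed


lemma eval_zero:
  assumes a: "a > 0" and z: "z \<in> Prim (8*a)"
  shows "poly (map_poly of_int
    ((\<Prod>(s, t)\<in>{(s, t). 1 \<le> s \<and> s < t \<and> t \<le> 4*a}. (monom (1::int) (2 * t) - monom 1 (2 * s)))
     - smult ((-1) ^ (a+1) * (int (4*a)) ^ (2*a)) (monom 1 (2*a)))) z = 0"
proof -
  have n: "8*a > 0" using a by simp
  obtain k where k: "k \<in> Kset (8*a)" and zk: "z = cis (2*pi*real k/real (8*a))"
    using z Prim_image[OF n] by auto
  have cop8: "coprime k (8*a)" using k by (simp add: Kset_def)
  have oddk: "odd k"
  proof
    assume "even k"
    moreover have "(2::nat) dvd 8*a" by simp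
    ultimately have "is_unit (2::nat)" using cop8 coprime_common_divisor by blast
    thus False by simp
  qed
  have cop: "coprime k (4*a)"
  proof -
    have "8*a = 2*(4*a)" by simp
    thus ?thesis using cop8 by (metis coprime_mult_right_iff)
  qed
  have zz: "z = cis (pi * real k / real (4*a))" unfolding zk using a by (simp add: field_simps)
  have F: "poly (map_poly of_int (\<Prod>(s, t)\<in>{(s, t). 1 \<le> s \<and> s < t \<and> t \<le> 4*a}. (monom (1::int) (2 * t) - monom 1 (2 * s)))) z
      = (\<Prod>(s,t)\<in>Sset (4*a). z^(2*t) - z^(2*s))"
    by (simp add: ip_prod poly_prod split_def poly_monom Sset_def)
  have "(\<Prod>(s,t)\<in>Sset (4*a). z^(2*t) - z^(2*s)) = (-1)^(a+1) * of_nat (4*a)^(2*a) * z^(2*a)"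
    unfolding zz by (rule keyB[OF a refl cop oddk])
  thus ?thesis using F by (simp add: poly_monom)
qed

lemma main_gen:
  assumes a: "a > 0"
  shows "cyclotomic_poly (8*a) dvd
    ((\<Prod>(s, t)\<in>{(s, t). 1 \<le> s \<and> s < t \<and> t \<le> 4*a}. (monom (1::int) (2 * t) - monom 1 (2 * s)))
     - smult ((-1) ^ (a+1) * (int (4*a)) ^ (2*a)) (monom 1 (2*a)))"
    (is "?P dvd ?F")
proof -
  have n: "8*a > 0" using a by simp
  have mapP: "map_poly of_int ?P = CP (8*a)" by (rule cyclo_map[OF n])
  have "(of_int (lead_coeff ?P) :: complex) = lead_coeff (map_poly of_int ?P)"
    by (simp add: coeff_map_poly)
  also have "\<dots> = 1" unfolding mapP by (rule lead_CP)
  finally have lead: "lead_coeff ?P = 1" by (simp del: ip_lead)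
  obtain q r where qr: "?F = ?P * q + r" "r = 0 \<or> degree r < degree ?P"
    using monic_div[OF lead] by blast
  have "r = 0"
  proof (rule ccontr)
    assume r0: "r \<noteq> 0"
    hence deg: "degree r < degree ?P" using qr(2) by simp
    have sub: "Prim (8*a) \<subseteq> {z. poly (map_poly of_int r) z = 0}"
    proof
      fix z assume z: "z \<in> Prim (8*a)"
      have "poly (CP (8*a)) z = 0"
        unfolding CP_def poly_prod using z Prim_finite[OF n]
        by (subst prod_zero_iff) auto
      moreover have "poly (map_poly of_int ?F) z = 0" by (rule eval_zero[OF a z])
      ultimately have "poly (map_poly of_int r) z = 0"
        using qr(1) mapP
        by (metis (no_types, lifting) add_0 ip_add ip_mult mult_zero_left poly_add poly_mult)
      thus "z \<in> {z. poly (map_poly of_int r) z = 0}" by simp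
    qed
    have mr0: "map_poly (of_int :: int \<Rightarrow> complex) r \<noteq> 0" using r0 by simp
    have "card (Prim (8*a)) \<le> card {z. poly (map_poly (of_int :: int \<Rightarrow> complex) r) z = 0}"
      by (rule card_mono[OF poly_roots_finite[OF mr0] sub])
    also have "\<dots> \<le> degree (map_poly (of_int :: int \<Rightarrow> complex) r)"
      by (rule card_poly_roots_bound[OF mr0])
    also have "\<dots> = degree r" by simp
    also have "\<dots> < degree ?P" by (rule deg)
    also have "degree ?P = degree (CP (8*a))" using mapP ip_degree by metis
    also have "\<dots> = card (Prim (8*a))" by (rule degree_CP[OF n])
    finally show False by simp
  qed
  with qr(1) show ?thesis by simp
qed


theorem lemma2p5:
  fixes p :: nat
  assumes "prime p" and "odd p"
  shows "cyclotomic_poly (p^2 - 1) dvd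
    ((\<Prod>(s, t)\<in>{(s, t). 1 \<le> s \<and> s < t \<and> t \<le> (p^2 - 1) div 2}.
        (monom (1::int) (2 * t) - monom 1 (2 * s)))
     - smult ((-1) ^ ((p^2 + 7) div 8) * (int ((p^2 - 1) div 2)) ^ ((p^2 - 1) div 4))
         (monom 1 ((p^2 - 1) div 4)))"
proof -
  obtain b where b: "p = 2*b + 1" using assms(2) by (metis oddE)
  have "p \<noteq> 1" using assms(1) by auto
  hence b0: "b > 0" using b by simp
  have "even (b*(b+1))" by simp
  then obtain a where a: "b*(b+1) = 2*a" by blast
  have a0: "a > 0" using a b0 by (metis add_gr_0 mult_pos_pos nat_0_less_mult_iff zero_less_one)
  have psq: "p^2 = 4*(b*(b+1)) + 1" unfolding b by (simp add: power2_eq_square algebra_simps)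
  have e1: "p^2 - 1 = 8*a" using psq a by simp
  have e3: "(p^2 + 7) div 8 = a + 1" using psq a by simp
  have e2: "8*a div 2 = 4*a" by simp
  have e4: "8*a div 4 = 2*a" by simp
  show ?thesis unfolding e3 e1 e2 e4 using main_gen[OF a0] by simp
qed


end
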